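(* Let $\mathcal{S}\subset\mathbb{R}_{\ge0}$ be measurable with positive Lebesgue measure and let $\mathcal{G}$ be a convex class of probability distributions on $\mathbb{R}$ (i.e. $\lambda G_1+(1-\lambda)G_2\in\mathcal{G}$ for all $\lambda\in[0,1]$, $G_1,G_2\in\mathcal{G}$). Then $\mathrm{Tilt}[\mathcal{G}]=\{\mathrm{Tilt}[G]:G\in\mathcal{G}\}$ is also a convex class of probability distributions.
   Context: With $\varphi^{\mathrm{fold}}(z;\mu)=\varphi(z;\mu)+\varphi(-z;\mu)$, where $\varphi(z;\mu)$ is the $\mathrm{N}(\mu,1)$ density, and $\Phi(\mathcal{S};\mu)=\int_{\mathcal{S}}\varphi^{\mathrm{fold}}(z;\mu)dz$, the tilting of a prior $G$ is $\mathrm{Tilt}[G](d\mu)=\frac{\Phi(\mathcal{S};\mu)G(d\mu)}{\int\Phi(\mathcal{S};\mu')G(d\mu')}$. *)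

theory Defs
  imports "HOL-Probability.Probability"
begin

definition phi_fold :: "real \<Rightarrow> real \<Rightarrow> real" where
  "phi_fold z \<mu> = normal_density \<mu> 1 z + normal_density \<mu> 1 (- z)"

definition Phi_sel :: "real set \<Rightarrow> real \<Rightarrow> real" where
  "Phi_sel S \<mu> = (LINT z:S|lborel. phi_fold z \<mu>)"

definition prob_dist :: "real measure \<Rightarrow> bool" where
  "prob_dist G \<longleftrightarrow> prob_space G \<and> sets G = sets borel"

definition mix :: "real \<Rightarrow> real measure \<Rightarrow> real measure \<Rightarrow> real measure" where
  "mix t G1 G2 = measure_of UNIV (sets borel)
     (\<lambda>A. ennreal t * emeasure G1 A + ennreal (1 - t) * emeasure G2 A)"

definition convex_class :: "real measure set \<Rightarrow> bool" where
  "convex_class \<G> \<longleftrightarrow> (\<forall>t\<in>{0..1}. \<forall>G1\<in>\<G>. \<forall>G2\<in>\<G>. mix t G1 G2 \<in> \<G>)"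

definition Tilt :: "real set \<Rightarrow> real measure \<Rightarrow> real measure" where
  "Tilt S G = density G (\<lambda>\<mu>. ennreal (Phi_sel S \<mu> / (\<integral>\<mu>'. Phi_sel S \<mu>' \<partial>G)))"

end

theory Submission
  imports Defs
begin

lemma phi_fold_nonneg: "0 \<le> phi_fold z m"
  unfolding phi_fold_def by simp

lemma phi_fold_pos: "0 < phi_fold z m"
  unfolding phi_fold_def by (intro add_pos_pos normal_density_pos) auto

lemma integrable_phi_fold: "integrable lborel (\<lambda>z. phi_fold z m)"
proof -
  have e: "(\<lambda>z. normal_density m 1 (- z)) = normal_density (-m) 1"
    by (rule ext) (simp add: normal_density_def power2_commute add.commute)
  have "integrable lborel (\<lambda>z. normal_density m 1 (- z))"
    unfolding e by simp
  then show ?thesis unfolding phi_fold_def by (intro Bochner_Integration.integrable_add) auto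
qed

lemma integral_phi_fold: "(\<integral>z. phi_fold z m \<partial>lborel) = 2"
proof -
  have e: "(\<lambda>z. normal_density m 1 (- z)) = normal_density (-m) 1"
    by (rule ext) (simp add: normal_density_def power2_commute add.commute)
  show ?thesis unfolding phi_fold_def e
    by (subst Bochner_Integration.integral_add) (auto simp: e)
qed

lemma phi_fold_meas[measurable]: "(\<lambda>(z, m). phi_fold z m) \<in> borel_measurable (borel \<Otimes>\<^sub>M borel)"
  unfolding phi_fold_def normal_density_def by measurable

lemma Phi_sel_alt: "Phi_sel S m = (\<integral>z. indicator S z * phi_fold z m \<partial>lborel)"
  unfolding Phi_sel_def set_lebesgue_integral_def by simp

lemma Phi_sel_meas:
  assumes S: "S \<in> sets lborel"
  shows "Phi_sel S \<in> borel_measurable borel"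
proof -
  have "(\<lambda>m. \<integral>z. indicator S z * phi_fold z m \<partial>lborel) \<in> borel_measurable borel"
  proof (rule lborel.borel_measurable_lebesgue_integral)
    have "(\<lambda>(m, z). indicator S z * phi_fold z m) \<in> borel_measurable (borel \<Otimes>\<^sub>M lborel)"
      using S phi_fold_meas unfolding phi_fold_def normal_density_def by measurable
    then show "(\<lambda>(m, z). indicator S z * phi_fold z m) \<in> borel_measurable (borel \<Otimes>\<^sub>M lborel)" .
  qed
  then show ?thesis by (simp add: Phi_sel_alt[abs_def])
qed

lemma Phi_sel_le: "Phi_sel S m \<le> 2"
proof -
  have "(\<integral>z. indicator S z * phi_fold z m \<partial>lborel) \<le> (\<integral>z. phi_fold z m \<partial>lborel)"
    by (rule integral_mono') (auto simp: integrable_phi_fold phi_fold_nonneg indicator_def)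
  then show ?thesis by (simp add: Phi_sel_alt integral_phi_fold)
qed

lemma Phi_sel_pos:
  assumes S: "S \<in> sets lborel" and pos: "emeasure lborel S > 0"
  shows "0 < Phi_sel S m"
proof -
  let ?f = "\<lambda>z. indicator S z * phi_fold z m"
  have int: "integrable lborel ?f"
    using integrable_real_mult_indicator[OF S integrable_phi_fold, of m] by (simp add: mult.commute)
  have nn: "AE x in lborel. 0 \<le> ?f x" by (auto simp: phi_fold_nonneg)
  have ge: "0 \<le> integral\<^sup>L lborel ?f" by (rule integral_nonneg_AE[OF nn])
  have "integral\<^sup>L lborel ?f \<noteq> 0"
  proof
    assume "integral\<^sup>L lborel ?f = 0"
    then have "AE x in lborel. ?f x = 0" using integral_nonneg_eq_0_iff_AE[OF int nn] by simp
    then have "AE x in lborel. x \<notin> S"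
      by eventually_elim (use phi_fold_pos in \<open>auto simp: indicator_def less_le\<close>)
    then have "emeasure lborel S = 0"
      using AE_iff_measurable[of S lborel "\<lambda>x. x \<notin> S"] S by auto
    then show False using pos by simp
  qed
  then show ?thesis using ge by (simp add: Phi_sel_alt)
qed


lemma sets_mix[simp, measurable_cong]: "sets (mix t G1 G2) = sets borel"
  unfolding mix_def using sets.sigma_sets_eq[of borel] by (simp add: sets_measure_of)

lemma space_mix[simp]: "space (mix t G1 G2) = UNIV"
  unfolding mix_def by (simp add: space_measure_of_conv)

lemma emeasure_mix:
  assumes s1: "sets G1 = sets borel" and s2: "sets G2 = sets borel" and A: "A \<in> sets borel"
  shows "emeasure (mix t G1 G2) A = ennreal t * emeasure G1 A + ennreal (1 - t) * emeasure G2 A"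
  unfolding mix_def
proof (rule emeasure_measure_of_sigma[OF _ _ _ A])
  show "sigma_algebra UNIV (sets borel)"
    using sets.sigma_algebra_axioms[of borel] by simp
  show "positive (sets borel) (\<lambda>A. ennreal t * emeasure G1 A + ennreal (1 - t) * emeasure G2 A)"
    by (simp add: positive_def)
  show "countably_additive (sets borel) (\<lambda>A. ennreal t * emeasure G1 A + ennreal (1 - t) * emeasure G2 A)"
    unfolding countably_additive_def
  proof (intro allI impI)
    fix F :: "nat \<Rightarrow> real set"
    assume F: "range F \<subseteq> sets borel" "disjoint_family F" "\<Union> (range F) \<in> sets borel"
    have 1: "(\<Sum>i. emeasure G1 (F i)) = emeasure G1 (\<Union> (range F))"
      using F s1 by (intro suminf_emeasure) auto
    have 2: "(\<Sum>i. emeasure G2 (F i)) = emeasure G2 (\<Union> (range F))"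
      using F s2 by (intro suminf_emeasure) auto
    show "(\<Sum>i. ennreal t * emeasure G1 (F i) + ennreal (1 - t) * emeasure G2 (F i)) =
          ennreal t * emeasure G1 (\<Union> (range F)) + ennreal (1 - t) * emeasure G2 (\<Union> (range F))"
      by (subst suminf_add[OF summableI summableI, symmetric]) (simp add: 1 2)
  qed
qed

lemma nn_integral_mix:
  assumes s1: "sets G1 = sets borel" and s2: "sets G2 = sets borel"
    and g: "g \<in> borel_measurable borel"
  shows "(\<integral>\<^sup>+x. g x \<partial>mix t G1 G2) = ennreal t * (\<integral>\<^sup>+x. g x \<partial>G1) + ennreal (1 - t) * (\<integral>\<^sup>+x. g x \<partial>G2)"
  using g
proof induction
  case (cong f g)
  have "\<And>M. sets M = sets borel \<Longrightarrow> (\<integral>\<^sup>+x. f x \<partial>M) = (\<integral>\<^sup>+x. g x \<partial>M)"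
    using cong(3) by (intro nn_integral_cong) (simp add: sets_eq_imp_space_eq)
  then show ?case using cong(4) s1 s2 by (metis sets_mix)
next
  case (set A)
  then show ?case using s1 s2 by (simp add: emeasure_mix)
next
  case (mult u c)
  have m1: "u \<in> borel_measurable G1" using mult(2) s1 by (simp cong: measurable_cong_sets)
  have m2: "u \<in> borel_measurable G2" using mult(2) s2 by (simp cong: measurable_cong_sets)
  have m: "u \<in> borel_measurable (mix t G1 G2)" using mult(2) by (simp cong: measurable_cong_sets)
  show ?case
    using mult(4)
    by (simp add: nn_integral_cmult m1 m2 m distrib_left mult.left_commute)
next
  case (add u v)
  have m1: "u \<in> borel_measurable G1" "v \<in> borel_measurable G1" using add s1 by (simp_all cong: measurable_cong_sets)
  have m2: "u \<in> borel_measurable G2" "v \<in> borel_measurable G2" using add s2 by (simp_all cong: measurable_cong_sets)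
  have m: "u \<in> borel_measurable (mix t G1 G2)" "v \<in> borel_measurable (mix t G1 G2)" using add by (simp_all cong: measurable_cong_sets)
  show ?case
    using add
    by (simp add: nn_integral_add m1 m2 m distrib_left algebra_simps)
next
  case (seq U)
  have inc: "incseq U" using seq by blast
  have m1: "\<And>i. U i \<in> borel_measurable G1" using seq(1) s1 by (simp cong: measurable_cong_sets)
  have m2: "\<And>i. U i \<in> borel_measurable G2" using seq(1) s2 by (simp cong: measurable_cong_sets)
  have m: "\<And>i. U i \<in> borel_measurable (mix t G1 G2)" using seq(1) by (simp cong: measurable_cong_sets)
  have i1: "incseq (\<lambda>i. ennreal t * integral\<^sup>N G1 (U i))"
    using inc unfolding incseq_def
    by (auto intro!: mult_left_mono nn_integral_mono simp: le_fun_def)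
  have i2: "incseq (\<lambda>i. ennreal (1 - t) * integral\<^sup>N G2 (U i))"
    using inc unfolding incseq_def
    by (auto intro!: mult_left_mono nn_integral_mono simp: le_fun_def)
  have "(\<integral>\<^sup>+x. (SUP i. U i) x \<partial>mix t G1 G2) = (SUP i. integral\<^sup>N (mix t G1 G2) (U i))"
    using m inc by (simp add: nn_integral_monotone_convergence_SUP image_comp)
  also have "\<dots> = (SUP i. ennreal t * integral\<^sup>N G1 (U i) + ennreal (1 - t) * integral\<^sup>N G2 (U i))"
    using seq by simp
  also have "\<dots> = (SUP i. ennreal t * integral\<^sup>N G1 (U i)) + (SUP i. ennreal (1 - t) * integral\<^sup>N G2 (U i))"
    by (rule ennreal_SUP_add[OF i1 i2])
  also have "\<dots> = ennreal t * (\<integral>\<^sup>+x. (SUP i. U i) x \<partial>G1) + ennreal (1 - t) * (\<integral>\<^sup>+x. (SUP i. U i) x \<partial>G2)"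
    using m1 m2 inc
    by (simp add: nn_integral_monotone_convergence_SUP image_comp SUP_mult_left_ennreal)
  finally show ?case .
qed


lemma Phi_meas_G:
  assumes S: "S \<in> sets lborel" and G: "sets G = sets borel"
  shows "Phi_sel S \<in> borel_measurable G"
  using Phi_sel_meas[OF S] G by (simp cong: measurable_cong_sets)

lemma Phi_int:
  assumes S: "S \<in> sets lborel" and pos: "emeasure lborel S > 0" and G: "prob_dist G"
  shows "integrable G (Phi_sel S)" and "0 < (\<integral>m. Phi_sel S m \<partial>G)"
    and "(\<integral>\<^sup>+m. ennreal (Phi_sel S m) \<partial>G) = ennreal (\<integral>m. Phi_sel S m \<partial>G)"
proof -
  interpret prob_space G using G by (simp add: prob_dist_def)
  have sG: "sets G = sets borel" using G by (simp add: prob_dist_def)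
  show int: "integrable G (Phi_sel S)"
    using Phi_sel_le Phi_sel_pos[OF S pos] Phi_meas_G[OF S sG]
    by (intro integrable_const_bound[where B=2]) (auto simp: less_imp_le)
  show "(\<integral>\<^sup>+m. ennreal (Phi_sel S m) \<partial>G) = ennreal (\<integral>m. Phi_sel S m \<partial>G)"
    using Phi_sel_pos[OF S pos] by (intro nn_integral_eq_integral int) (auto simp: less_imp_le)
  show "0 < (\<integral>m. Phi_sel S m \<partial>G)"
  proof -
    have ge: "0 \<le> (\<integral>m. Phi_sel S m \<partial>G)"
      using Phi_sel_pos[OF S pos] by (intro integral_nonneg_AE) (auto simp: less_imp_le)
    have "(\<integral>m. Phi_sel S m \<partial>G) \<noteq> 0"
    proof
      assume "(\<integral>m. Phi_sel S m \<partial>G) = 0"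
      then have "AE m in G. Phi_sel S m = 0"
        using integral_nonneg_eq_0_iff_AE[OF int] Phi_sel_pos[OF S pos] by (auto simp: less_imp_le)
      then have "AE m in G. False" using Phi_sel_pos[OF S pos] by (auto elim: AE_mp simp: less_le)
      then show False using AE_False prob_space_axioms prob_space.not_empty by auto
    qed
    then show ?thesis using ge by simp
  qed
qed

lemma Tilt_prob:
  assumes S: "S \<in> sets lborel" and pos: "emeasure lborel S > 0" and G: "prob_dist G"
  shows "prob_dist (Tilt S G)"
proof -
  interpret prob_space G using G by (simp add: prob_dist_def)
  have sG: "sets G = sets borel" using G by (simp add: prob_dist_def)
  define c where "c = (\<integral>m. Phi_sel S m \<partial>G)"
  have c: "0 < c" using Phi_int(2)[OF S pos G] by (simp add: c_def)
  have int: "integrable G (\<lambda>m. Phi_sel S m / c)"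
    using Phi_int(1)[OF S pos G] by simp
  have "emeasure (Tilt S G) (space (Tilt S G)) = (\<integral>\<^sup>+m. ennreal (Phi_sel S m / c) * indicator (space G) m \<partial>G)"
    unfolding Tilt_def c_def[symmetric] using Phi_meas_G[OF S sG]
    by (subst emeasure_density) auto
  also have "\<dots> = (\<integral>\<^sup>+m. ennreal (Phi_sel S m / c) \<partial>G)"
    by (intro nn_integral_cong) simp
  also have "\<dots> = ennreal (\<integral>m. Phi_sel S m / c \<partial>G)"
    using Phi_sel_pos[OF S pos] c by (intro nn_integral_eq_integral int) (auto simp: less_imp_le)
  also have "\<dots> = 1" using c by (simp add: c_def)
  finally have "prob_space (Tilt S G)" by (rule prob_spaceI)
  then show ?thesis unfolding prob_dist_def Tilt_def using sG by simp
qed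


lemma Tilt_mix:
  assumes S: "S \<in> sets lborel" and pos: "emeasure lborel S > 0"
    and G1: "prob_dist G1" and G2: "prob_dist G2" and t: "0 \<le> t" "t \<le> 1"
  obtains s where "0 \<le> s" "s \<le> 1" "mix t (Tilt S G1) (Tilt S G2) = Tilt S (mix s G1 G2)"
proof -
  have s1: "sets G1 = sets borel" using G1 by (simp add: prob_dist_def)
  have s2: "sets G2 = sets borel" using G2 by (simp add: prob_dist_def)
  define c1 where "c1 = (\<integral>m. Phi_sel S m \<partial>G1)"
  define c2 where "c2 = (\<integral>m. Phi_sel S m \<partial>G2)"
  have c1: "0 < c1" using Phi_int(2)[OF S pos G1] by (simp add: c1_def)
  have c2: "0 < c2" using Phi_int(2)[OF S pos G2] by (simp add: c2_def)
  define d where "d = t * c2 + (1 - t) * c1"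
  have d: "0 < d"
  proof (cases "t = 0")
    case True then show ?thesis using c1 by (simp add: d_def)
  next
    case False then have "0 < t * c2" using t c2 by simp
    moreover have "0 \<le> (1 - t) * c1" using t c1 by simp
    ultimately show ?thesis by (simp add: d_def)
  qed
  define s where "s = t * c2 / d"
  have s0: "0 \<le> s" using t c2 d by (simp add: s_def)
  have s1': "s \<le> 1" using t c1 c2 d by (simp add: s_def d_def field_simps)
  have oms: "1 - s = (1 - t) * c1 / d" using d by (simp add: s_def d_def field_simps)
  define G where "G = mix s G1 G2"
  have sG: "sets G = sets borel" by (simp add: G_def)
  have meas: "(\<lambda>m. ennreal (Phi_sel S m)) \<in> borel_measurable borel"
    using Phi_sel_meas[OF S] by simp
  define c where "c = (\<integral>m. Phi_sel S m \<partial>G)"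
  have cI: "ennreal (s * c1 + (1 - s) * c2) = (\<integral>\<^sup>+m. ennreal (Phi_sel S m) \<partial>G)"
    unfolding G_def nn_integral_mix[OF s1 s2 meas]
    using Phi_int(3)[OF S pos G1] Phi_int(3)[OF S pos G2] s0 s1' c1 c2
    by (simp add: c1_def[symmetric] c2_def[symmetric] ennreal_mult ennreal_plus[symmetric])
  show ?thesis
  proof (rule that[OF s0 s1'])
    have cc: "c = s * c1 + (1 - s) * c2"
    proof -
      have "prob_dist G"
        unfolding prob_dist_def
      proof
        show "prob_space G"
        proof (rule prob_spaceI)
          have "emeasure G (space G) = emeasure G UNIV" by (simp add: G_def)
          also have "\<dots> = ennreal s * 1 + ennreal (1 - s) * 1"
          proof -
            have "space G1 = UNIV" "space G2 = UNIV"
              using sets_eq_imp_space_eq[OF s1] sets_eq_imp_space_eq[OF s2] by simp_all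
            then have "emeasure G1 UNIV = 1" "emeasure G2 UNIV = 1"
              using G1 G2 by (metis prob_dist_def prob_space.emeasure_space_1)+
            then show ?thesis unfolding G_def by (subst emeasure_mix[OF s1 s2]) auto
          qed
          also have "\<dots> = 1" using s0 s1' by (simp add: ennreal_plus[symmetric])
          finally show "emeasure G (space G) = 1" .
        qed
        show "sets G = sets borel" by (rule sG)
      qed
      then have "ennreal c = ennreal (s * c1 + (1 - s) * c2)"
        using Phi_int(3)[OF S pos] cI by (simp only: c_def)
      moreover have "0 \<le> c" using Phi_int(2)[OF S pos \<open>prob_dist G\<close>] by (simp add: c_def)
      moreover have "0 \<le> s * c1 + (1 - s) * c2" using s0 s1' c1 c2 by simp
      ultimately show ?thesis using ennreal_inj by blast
    qed
    have cd: "c = c1 * c2 / d"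
    proof -
      have "c = (t * c2) / d * c1 + ((1 - t) * c1) / d * c2" unfolding cc oms by (simp add: s_def)
      also have "\<dots> = (t * c2 * c1 + (1 - t) * c1 * c2) / d" by (simp add: add_divide_distrib)
      also have "t * c2 * c1 + (1 - t) * c1 * c2 = c1 * c2" by algebra
      finally show ?thesis .
    qed
    have c0: "0 < c" using cd c1 c2 d by simp
    have k1: "s / c = t / c1" using d c1 c2 by (simp add: cd s_def field_simps)
    have k2: "(1 - s) / c = (1 - t) / c2" using d c1 c2 by (simp add: cd oms field_simps)
    show "mix t (Tilt S G1) (Tilt S G2) = Tilt S (mix s G1 G2)"
    proof (rule measure_eqI)
      show "sets (mix t (Tilt S G1) (Tilt S G2)) = sets (Tilt S (mix s G1 G2))"
        by (simp add: Tilt_def)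
      fix A assume "A \<in> sets (mix t (Tilt S G1) (Tilt S G2))"
      then have A: "A \<in> sets borel" by simp
      have m1: "(\<lambda>m. ennreal (Phi_sel S m / c1)) \<in> borel_measurable G1"
        using Phi_meas_G[OF S s1] by simp
      have m2: "(\<lambda>m. ennreal (Phi_sel S m / c2)) \<in> borel_measurable G2"
        using Phi_meas_G[OF S s2] by simp
      have m: "(\<lambda>m. ennreal (Phi_sel S m / c) * indicator A m) \<in> borel_measurable borel"
        using Phi_sel_meas[OF S] A by simp
      have "emeasure (mix t (Tilt S G1) (Tilt S G2)) A =
          ennreal t * (\<integral>\<^sup>+m. ennreal (Phi_sel S m / c1) * indicator A m \<partial>G1) +
          ennreal (1 - t) * (\<integral>\<^sup>+m. ennreal (Phi_sel S m / c2) * indicator A m \<partial>G2)"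
        using A s1 s2 m1 m2
        by (simp add: emeasure_mix Tilt_def emeasure_density c1_def[symmetric] c2_def[symmetric])
      also have "\<dots> = (\<integral>\<^sup>+m. ennreal t * (ennreal (Phi_sel S m / c1) * indicator A m) \<partial>G1) +
          (\<integral>\<^sup>+m. ennreal (1 - t) * (ennreal (Phi_sel S m / c2) * indicator A m) \<partial>G2)"
        using A s1 s2 m1 m2 by (simp add: nn_integral_cmult)
      also have "\<dots> = (\<integral>\<^sup>+m. ennreal s * (ennreal (Phi_sel S m / c) * indicator A m) \<partial>G1) +
          (\<integral>\<^sup>+m. ennreal (1 - s) * (ennreal (Phi_sel S m / c) * indicator A m) \<partial>G2)"
      proof -
        have e1: "ennreal t * ennreal (x / c1) = ennreal s * ennreal (x / c)" if "0 \<le> x" for x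
        proof -
          have "t * (x / c1) = s * (x / c)" using k1 by (metis times_divide_eq_left times_divide_eq_right mult.commute)
          moreover have "ennreal t * ennreal (x / c1) = ennreal (t * (x / c1))"
            using t that c1 by (intro ennreal_mult[symmetric]) auto
          moreover have "ennreal s * ennreal (x / c) = ennreal (s * (x / c))"
            using s0 that c0 by (intro ennreal_mult[symmetric]) auto
          ultimately show ?thesis by simp
        qed
        have e2: "ennreal (1 - t) * ennreal (x / c2) = ennreal (1 - s) * ennreal (x / c)" if "0 \<le> x" for x
        proof -
          have "(1 - t) * (x / c2) = (1 - s) * (x / c)" using k2 by (metis times_divide_eq_left times_divide_eq_right mult.commute)
          moreover have "ennreal (1 - t) * ennreal (x / c2) = ennreal ((1 - t) * (x / c2))"
            using t that c2 by (intro ennreal_mult[symmetric]) auto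
          moreover have "ennreal (1 - s) * ennreal (x / c) = ennreal ((1 - s) * (x / c))"
            using s1' that c0 by (intro ennreal_mult[symmetric]) auto
          ultimately show ?thesis by simp
        qed
        show ?thesis
          using e1[OF less_imp_le[OF Phi_sel_pos[OF S pos]]] e2[OF less_imp_le[OF Phi_sel_pos[OF S pos]]]
          by (simp add: mult.assoc[symmetric])
      qed
      also have "\<dots> = ennreal s * (\<integral>\<^sup>+m. ennreal (Phi_sel S m / c) * indicator A m \<partial>G1) +
          ennreal (1 - s) * (\<integral>\<^sup>+m. ennreal (Phi_sel S m / c) * indicator A m \<partial>G2)"
        using m s1 s2 by (simp add: nn_integral_cmult measurable_cong_sets[OF s1 refl] measurable_cong_sets[OF s2 refl])
      also have "\<dots> = (\<integral>\<^sup>+m. ennreal (Phi_sel S m / c) * indicator A m \<partial>G)"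
        unfolding G_def by (rule nn_integral_mix[OF s1 s2 m, symmetric])
      also have "\<dots> = emeasure (Tilt S (mix s G1 G2)) A"
        using Phi_meas_G[OF S sG] A sG unfolding Tilt_def G_def[symmetric] c_def[symmetric]
        by (subst emeasure_density) auto
      finally show "emeasure (mix t (Tilt S G1) (Tilt S G2)) A = emeasure (Tilt S (mix s G1 G2)) A" .
    qed
  qed
qed


theorem proposition2:
  fixes S :: "real set" and \<G> :: "real measure set"
  assumes "S \<in> sets lborel" and "S \<subseteq> {0..}" and "emeasure lborel S > 0"
    and "\<forall>G\<in>\<G>. prob_dist G" and "convex_class \<G>"
  shows "(\<forall>H\<in>Tilt S ` \<G>. prob_dist H) \<and> convex_class (Tilt S ` \<G>)"
proof
  show "\<forall>H\<in>Tilt S ` \<G>. prob_dist H"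
    using Tilt_prob[OF assms(1,3)] assms(4) by blast
  show "convex_class (Tilt S ` \<G>)"
    unfolding convex_class_def
  proof (intro ballI)
    fix t :: real and H1 H2 assume t: "t \<in> {0..1}" and H1: "H1 \<in> Tilt S ` \<G>" and H2: "H2 \<in> Tilt S ` \<G>"
    obtain G1 where G1: "G1 \<in> \<G>" "H1 = Tilt S G1" using H1 by blast
    obtain G2 where G2: "G2 \<in> \<G>" "H2 = Tilt S G2" using H2 by blast
    obtain s where s: "0 \<le> s" "s \<le> 1" "mix t (Tilt S G1) (Tilt S G2) = Tilt S (mix s G1 G2)"
    proof -
      have p1: "prob_dist G1" and p2: "prob_dist G2" using G1 G2 assms(4) by auto
      have t0: "0 \<le> t" and t1: "t \<le> 1" using t by auto
      show ?thesis by (rule Tilt_mix[OF assms(1,3) p1 p2 t0 t1]) (rule that)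
    qed
    have "mix s G1 G2 \<in> \<G>" using assms(5) G1 G2 s unfolding convex_class_def by auto
    then show "mix t H1 H2 \<in> Tilt S ` \<G>" using s G1 G2 by auto
  qed
qed

end
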